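(* Let $0<s<1$ and $0<a<1/3$, and let $C_a\subset I=[0,1]$ be the fat Cantor set described below. Then \[\|\chi_{C_a}\|_{B^s_{1,1}(I)}\le C\sum_{j=1}^\infty(2a^{1-s})^j,\] where $C$ depends only on $s$.
   Context: $I=[0,1]$ carries the Euclidean distance and Lebesgue measure $\mathcal{H}^1$. Construction of $C_a$: remove the open interval $I_{1,1}$ of length $a$ centered at the center of $I$, leaving two closed intervals $C_{1,1},C_{1,2}$. Inductively, at stage $j$, remove from the center of each of the $2^{j-1}$ closed intervals $C_{j-1,k}$ an open interval $I_{j,k}$ of length $a^j$, leaving $2^j$ closed intervals $C_{j,k}$. Set $C_a=I\setminus\bigcup_{j\ge1}\bigcup_{k=1}^{2^{j-1}}I_{j,k}$. The Besov energy on $I$ is $\|u\|_{B^s_{1,1}(I)}=\int_I\int_I\frac{|u(y)-u(x)|}{|x-y|^s\,\mathcal{H}^1(B(x,|x-y|))}\,dy\,dx$, where $B(x,r)=\{y\in I:|x-y|<r\}$. *)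

theory Defs
  imports "HOL-Analysis.Analysis"
begin

text \<open>Closed intervals C_{j,k} (as endpoint pairs) remaining after stage j of the construction.\<close>
fun cantor_stage :: "real \<Rightarrow> nat \<Rightarrow> (real \<times> real) set" where
  "cantor_stage a 0 = {(0, 1)}"
| "cantor_stage a (Suc j) =
     (\<Union>(l, r)\<in>cantor_stage a j.
        {(l, (l + r) / 2 - a ^ Suc j / 2), ((l + r) / 2 + a ^ Suc j / 2, r)})"

definition removed_intervals :: "real \<Rightarrow> nat \<Rightarrow> real set set" where
  "removed_intervals a j =
     (\<lambda>(l, r). {(l + r) / 2 - a ^ j / 2 <..< (l + r) / 2 + a ^ j / 2}) ` cantor_stage a (j - 1)"

definition fat_cantor :: "real \<Rightarrow> real set" where
  "fat_cantor a = {0..1} - (\<Union>j\<in>{1..}. \<Union>(removed_intervals a j))"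

text \<open>Besov energy on I = [0,1], with B(x,r) = {y in I. |x - y| < r}.\<close>
definition besov_energy :: "real \<Rightarrow> (real \<Rightarrow> real) \<Rightarrow> ennreal" where
  "besov_energy s u =
     (\<integral>\<^sup>+ x \<in> {0..1}. (\<integral>\<^sup>+ y \<in> {0..1}.
        ennreal (\<bar>u y - u x\<bar> /
          (\<bar>x - y\<bar> powr s * measure lborel {z \<in> {0..1}. \<bar>x - z\<bar> < \<bar>x - y\<bar>})) \<partial>lborel) \<partial>lborel)"

end

theory Submission
  imports Defs
begin
lemma tail_int:
  fixes s x0 c :: real
  assumes s: "0 < s" and c: "x0 < c"
  shows "(\<integral>\<^sup>+y. ennreal ((y - x0) powr (-1-s)) * indicator {c..} y \<partial>lborel) = ennreal ((c-x0) powr (-s) / s)"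
proof -
  have "(\<integral>\<^sup>+y. ennreal ((y - x0) powr (-1-s)) * indicator {c..} y \<partial>lborel) = ennreal (0 - (- ((c - x0) powr (-s)) / s))"
  proof (rule nn_integral_FTC_atLeast[where F="\<lambda>y. - ((y - x0) powr (-s)) / s"])
    show "(\<lambda>y. (y - x0) powr (- 1 - s)) \<in> borel_measurable borel" by measurable
    fix y assume "c \<le> y"
    then have "y - x0 > 0" using c by simp
    show "0 \<le> (y - x0) powr (- 1 - s)" by simp
    show "((\<lambda>y. - ((y - x0) powr - s) / s) has_real_derivative (y - x0) powr (- 1 - s)) (at y)"
      using \<open>y - x0 > 0\<close> s
        apply (auto intro!: derivative_eq_intros) by (rule arg_cong[where f="\<lambda>t. (y-x0) powr t"]) simp
  next
    have "((\<lambda>y. (y - x0) powr - s) \<longlongrightarrow> 0) at_top"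
      by (rule tendsto_neg_powr) (use s in \<open>auto intro!: filterlim_tendsto_add_at_top[where f="\<lambda>_. - x0", simplified] filterlim_ident\<close>)
    from tendsto_minus[OF this] have "((\<lambda>y. - ((y - x0) powr - s)) \<longlongrightarrow> 0) at_top" by simp
    from tendsto_divide_zero[OF this, of s] show "((\<lambda>y. - ((y - x0) powr - s) / s) \<longlongrightarrow> 0) at_top" .
  qed
  then show ?thesis by simp
qed
lemma tail_int2:
  fixes s x0 c :: real
  assumes s: "0 < s" and c: "c < x0"
  shows "(\<integral>\<^sup>+y. ennreal ((x0 - y) powr (-1-s)) * indicator {..c} y \<partial>lborel) = ennreal ((x0-c) powr (-s) / s)"
proof -
  have "(\<integral>\<^sup>+y. ennreal ((x0 - y) powr (-1-s)) * indicator {..c} y \<partial>lborel)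
     = ennreal \<bar>-1::real\<bar> * (\<integral>\<^sup>+y. ennreal ((x0 - (0 + -1 * y)) powr (-1-s)) * indicator {..c} (0 + -1 * y) \<partial>lborel)"
    by (rule nn_integral_real_affine) auto
  also have "\<dots> = (\<integral>\<^sup>+y. ennreal ((y - (-x0)) powr (-1-s)) * indicator {-c..} y \<partial>lborel)"
    by (auto intro!: nn_integral_cong simp: indicator_def add.commute)
  also have "\<dots> = ennreal ((-c - (-x0)) powr (-s) / s)"
    by (rule tail_int) (use s c in auto)
  finally show ?thesis by simp
qed

lemma core_int:
  fixes s p q :: real
  assumes s: "0 < s" "s < 1" and pq: "p < q"
  shows "(\<integral>\<^sup>+x. indicator {p..q} x * ennreal (((x-p) powr (-s) + (q-x) powr (-s)) / s) \<partial>lborel)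
     = ennreal (2 * (q-p) powr (1-s) / (s*(1-s)))"
proof -
  define F where "F x = ((x-p) powr (1-s) - (q-x) powr (1-s)) / (s*(1-s))" for x
  have "((\<lambda>x. ((x-p) powr (-s) + (q-x) powr (-s)) / s) has_integral (F q - F p)) {p..q}"
  proof (rule fundamental_theorem_of_calculus_interior)
    show "p \<le> q" using pq by simp
    show "continuous_on {p..q} F" unfolding F_def using s
      by (intro continuous_intros continuous_on_powr') auto
    fix x assume x: "x \<in> {p<..<q}"
    show "(F has_vector_derivative ((x-p) powr (-s) + (q-x) powr (-s)) / s) (at x)"
      unfolding F_def has_real_derivative_iff_has_vector_derivative[symmetric]
      using x s
      apply (auto intro!: derivative_eq_intros)
      apply (subst distrib_left[symmetric])
      apply (subst mult.commute[of s])
      apply (subst mult_divide_mult_cancel_left_if)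
      apply simp
      done
  qed
  moreover have "F q - F p = 2 * (q-p) powr (1-s) / (s*(1-s))"
    unfolding F_def using pq by (simp add: field_simps)
  ultimately have "integral\<^sup>N lborel (\<lambda>x. indicator {p..q} x * (((x-p) powr (-s) + (q-x) powr (-s)) / s)) = 2 * (q-p) powr (1-s) / (s*(1-s))"
    by (intro nn_integral_has_integral_lebesgue) (use s in auto)
  moreover have "(\<lambda>x. indicator {p..q} x * ennreal (((x-p) powr (-s) + (q-x) powr (-s)) / s))
     = (\<lambda>x. ennreal (indicator {p..q} x * (((x-p) powr (-s) + (q-x) powr (-s)) / s)))"
    by (auto simp: indicator_def fun_eq_iff)
  ultimately show ?thesis by simp
qed
lemma inner_int:
  fixes s p q x :: real
  assumes s: "0 < s" and x: "p < x" "x < q"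
  shows "(\<integral>\<^sup>+y. ennreal ((1 - indicator {p<..<q} y) * \<bar>x - y\<bar> powr (-1-s)) \<partial>lborel)
     = ennreal (((x-p) powr (-s) + (q-x) powr (-s)) / s)"
proof -
  have "(\<integral>\<^sup>+y. ennreal ((1 - indicator {p<..<q} y) * \<bar>x - y\<bar> powr (-1-s)) \<partial>lborel)
    = (\<integral>\<^sup>+y. ennreal ((x - y) powr (-1-s)) * indicator {..p} y + ennreal ((y - x) powr (-1-s)) * indicator {q..} y \<partial>lborel)"
    using x by (intro nn_integral_cong) (auto simp: indicator_def abs_if)
  also have "\<dots> = (\<integral>\<^sup>+y. ennreal ((x - y) powr (-1-s)) * indicator {..p} y \<partial>lborel)
     + (\<integral>\<^sup>+y. ennreal ((y - x) powr (-1-s)) * indicator {q..} y \<partial>lborel)"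
    by (rule nn_integral_add) auto
  also have "\<dots> = ennreal ((x-p) powr (-s) / s) + ennreal ((q-x) powr (-s) / s)"
    using tail_int[OF s x(2)] tail_int2[OF s x(1)] by simp
  also have "\<dots> = ennreal (((x-p) powr (-s) + (q-x) powr (-s)) / s)"
    using s by (simp add: ennreal_plus[symmetric] add_divide_distrib del: ennreal_plus)
  finally show ?thesis .
qed

lemma interval_energy:
  fixes s p q :: real
  assumes s: "0 < s" "s < 1" and pq: "p < q"
  shows "(\<integral>\<^sup>+x. \<integral>\<^sup>+y. ennreal (\<bar>indicator {p<..<q} y - indicator {p<..<q} x\<bar> * \<bar>x - y\<bar> powr (-1-s)) \<partial>lborel \<partial>lborel)
     \<le> ennreal (4 * (q-p) powr (1-s) / (s*(1-s)))"
proof -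
  define g where "g x y = ennreal (indicator {p<..<q} x * (1 - indicator {p<..<q} y) * \<bar>x - y\<bar> powr (-1-s))" for x y :: real
  have gm[measurable]: "(\<lambda>(x, y). g x y) \<in> borel_measurable (lborel \<Otimes>\<^sub>M lborel)"
    unfolding g_def by measurable
  have gm2[measurable]: "(\<lambda>(x, y). g y x) \<in> borel_measurable (lborel \<Otimes>\<^sub>M lborel)"
    unfolding g_def by measurable
  have "(\<integral>\<^sup>+x. \<integral>\<^sup>+y. ennreal (\<bar>indicator {p<..<q} y - indicator {p<..<q} x\<bar> * \<bar>x - y\<bar> powr (-1-s)) \<partial>lborel \<partial>lborel)
     = (\<integral>\<^sup>+x. \<integral>\<^sup>+y. g x y + g y x \<partial>lborel \<partial>lborel)"
    unfolding g_def
    by (intro nn_integral_cong) (auto simp: indicator_def abs_minus_commute)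
  also have "\<dots> = (\<integral>\<^sup>+x. (\<integral>\<^sup>+y. g x y \<partial>lborel) + (\<integral>\<^sup>+y. g y x \<partial>lborel) \<partial>lborel)"
    by (intro nn_integral_cong nn_integral_add) (auto simp: g_def)
  also have "\<dots> = (\<integral>\<^sup>+x. \<integral>\<^sup>+y. g x y \<partial>lborel \<partial>lborel) + (\<integral>\<^sup>+x. \<integral>\<^sup>+y. g y x \<partial>lborel \<partial>lborel)"
    by (rule nn_integral_add) measurable
  also have "(\<integral>\<^sup>+x. \<integral>\<^sup>+y. g y x \<partial>lborel \<partial>lborel) = (\<integral>\<^sup>+x. \<integral>\<^sup>+y. g x y \<partial>lborel \<partial>lborel)"
    by (rule lborel_pair.Fubini'[of "\<lambda>y x. g x y", symmetric]) (use gm in \<open>simp add: case_prod_beta\<close>)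
  finally have eq: "(\<integral>\<^sup>+x. \<integral>\<^sup>+y. ennreal (\<bar>indicator {p<..<q} y - indicator {p<..<q} x\<bar> * \<bar>x - y\<bar> powr (-1-s)) \<partial>lborel \<partial>lborel)
     = (\<integral>\<^sup>+x. \<integral>\<^sup>+y. g x y \<partial>lborel \<partial>lborel) + (\<integral>\<^sup>+x. \<integral>\<^sup>+y. g x y \<partial>lborel \<partial>lborel)" .
  have le: "(\<integral>\<^sup>+x. \<integral>\<^sup>+y. g x y \<partial>lborel \<partial>lborel) \<le> ennreal (2 * (q-p) powr (1-s) / (s*(1-s)))"
  proof -
    have "(\<integral>\<^sup>+x. \<integral>\<^sup>+y. g x y \<partial>lborel \<partial>lborel)
       \<le> (\<integral>\<^sup>+x. indicator {p..q} x * ennreal (((x-p) powr (-s) + (q-x) powr (-s)) / s) \<partial>lborel)"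
    proof (rule nn_integral_mono)
      fix x :: real
      show "(\<integral>\<^sup>+y. g x y \<partial>lborel) \<le> indicator {p..q} x * ennreal (((x-p) powr (-s) + (q-x) powr (-s)) / s)"
      proof (cases "x \<in> {p<..<q}")
        case True
        then have "(\<integral>\<^sup>+y. g x y \<partial>lborel) = ennreal (((x-p) powr (-s) + (q-x) powr (-s)) / s)"
          unfolding g_def using inner_int[of s p x q] s by simp
        then show ?thesis using True by (simp add: indicator_def)
      next
        case False
        then have "(\<integral>\<^sup>+y. g x y \<partial>lborel) = 0" unfolding g_def by simp
        then show ?thesis by simp
      qed
    qed
    also have "\<dots> = ennreal (2 * (q-p) powr (1-s) / (s*(1-s)))"
      by (rule core_int[OF s pq])
    finally show ?thesis .
  qed
  have "(\<integral>\<^sup>+x. \<integral>\<^sup>+y. ennreal (\<bar>indicator {p<..<q} y - indicator {p<..<q} x\<bar> * \<bar>x - y\<bar> powr (-1-s)) \<partial>lborel \<partial>lborel)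
     \<le> ennreal (2 * (q-p) powr (1-s) / (s*(1-s))) + ennreal (2 * (q-p) powr (1-s) / (s*(1-s)))"
    unfolding eq by (rule add_mono[OF le le])
  also have "\<dots> = ennreal (4 * (q-p) powr (1-s) / (s*(1-s)))"
    using s by (simp add: ennreal_plus[symmetric] del: ennreal_plus)
  finally show ?thesis .
qed
definition lo :: "real \<Rightarrow> nat \<Rightarrow> real \<times> real \<Rightarrow> real" where
  "lo a i P = (fst P + snd P) / 2 - a ^ Suc i / 2"
definition hi :: "real \<Rightarrow> nat \<Rightarrow> real \<times> real \<Rightarrow> real" where
  "hi a i P = (fst P + snd P) / 2 + a ^ Suc i / 2"
definition GG :: "real \<Rightarrow> real \<Rightarrow> nat \<Rightarrow> real \<times> real \<Rightarrow> real \<Rightarrow> real \<Rightarrow> ennreal" where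
  "GG s a i P x y = ennreal (\<bar>indicator {lo a i P<..<hi a i P} y - indicator {lo a i P<..<hi a i P} x\<bar> * \<bar>x - y\<bar> powr (-1-s))"

lemma stage_card: "finite (cantor_stage a i) \<and> card (cantor_stage a i) \<le> 2 ^ i"
proof (induction i)
  case 0
  then show ?case by simp
next
  case (Suc i)
  let ?A = "\<lambda>P. (case P of (l, r) \<Rightarrow> {(l, (l + r) / 2 - a ^ Suc i / 2), ((l + r) / 2 + a ^ Suc i / 2, r)})"
  have fin: "finite (cantor_stage a (Suc i))" using Suc by (auto split: prod.splits)
  have "card (cantor_stage a (Suc i)) = card (\<Union>P\<in>cantor_stage a i. ?A P)" by simp
  also have "\<dots> \<le> (\<Sum>P\<in>cantor_stage a i. card (?A P))"
    by (rule card_UN_le) (use Suc in simp)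
  also have "\<dots> \<le> (\<Sum>P\<in>cantor_stage a i. 2)"
    by (rule sum_mono) (auto split: prod.splits simp: card_insert_le_m1)
  also have "\<dots> \<le> 2 ^ Suc i" using Suc by simp
  finally show ?case using fin by simp
qed

lemma not_fat:
  assumes "z \<in> {0..1}" "z \<notin> fat_cantor a"
  shows "\<exists>i. \<exists>P\<in>cantor_stage a i. z \<in> {lo a i P<..<hi a i P}"
proof -
  from assms obtain j I where j: "j \<ge> 1" "I \<in> removed_intervals a j" "z \<in> I"
    unfolding fat_cantor_def by auto
  then obtain P where P: "P \<in> cantor_stage a (j - 1)"
    "I = {(fst P + snd P) / 2 - a ^ j / 2 <..< (fst P + snd P) / 2 + a ^ j / 2}"
    unfolding removed_intervals_def by (auto split: prod.splits)
  have "Suc (j - 1) = j" using j by simp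
  then show ?thesis using P j unfolding lo_def hi_def by (intro exI[of _ "j - 1"] bexI[of _ P]) auto
qed

lemma in_fat:
  assumes "w \<in> fat_cantor a" "P \<in> cantor_stage a i"
  shows "w \<notin> {lo a i P<..<hi a i P}"
proof
  assume w: "w \<in> {lo a i P<..<hi a i P}"
  have "{lo a i P<..<hi a i P} \<in> removed_intervals a (Suc i)"
    unfolding removed_intervals_def lo_def hi_def using assms(2)
    by (auto intro!: image_eqI[of _ _ P] split: prod.splits)
  then show False using assms(1) w unfolding fat_cantor_def by force
qed

lemma ball_measure:
  fixes x y :: real
  assumes "x \<in> {0..1}" "y \<in> {0..1}"
  shows "\<bar>x - y\<bar> \<le> measure lborel {z \<in> {0..1}. \<bar>x - z\<bar> < \<bar>x - y\<bar>}"
proof -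
  let ?B = "{z \<in> {0..1}. \<bar>x - z\<bar> < \<bar>x - y\<bar>}"
  have Bs: "?B \<in> sets lborel" by measurable
  have Bf: "?B \<in> fmeasurable lborel"
  proof (rule fmeasurableI2[of "cbox 0 1"])
    show "cbox 0 (1::real) \<in> fmeasurable lborel" by (rule fmeasurable_cbox)
    show "?B \<subseteq> cbox 0 1" by (auto simp: cbox_interval)
    show "?B \<in> sets lborel" by (rule Bs)
  qed
  show ?thesis
  proof (cases "x \<le> y")
    case True
    have "measure lborel {x..<y} \<le> measure lborel ?B"
      by (rule measure_mono_fmeasurable[OF _ _ Bf]) (use assms True in auto)
    then show ?thesis using True by simp
  next
    case False
    have "measure lborel {y<..x} \<le> measure lborel ?B"
      by (rule measure_mono_fmeasurable[OF _ _ Bf]) (use assms False in auto)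
    then show ?thesis using False by simp
  qed
qed

lemma pointwise:
  fixes s a x y :: real
  assumes s: "0 < s" and xy: "x \<in> {0..1}" "y \<in> {0..1}"
  shows "ennreal (\<bar>indicator (fat_cantor a) y - indicator (fat_cantor a) x\<bar> /
          (\<bar>x - y\<bar> powr s * measure lborel {z \<in> {0..1}. \<bar>x - z\<bar> < \<bar>x - y\<bar>}))
     \<le> (\<Sum>i. \<Sum>P\<in>cantor_stage a i. GG s a i P x y)"
proof (cases "indicator (fat_cantor a) y = (indicator (fat_cantor a) x :: real)")
  case True
  then show ?thesis by simp
next
  case False
  then have "(x \<in> fat_cantor a \<and> y \<notin> fat_cantor a) \<or> (y \<in> fat_cantor a \<and> x \<notin> fat_cantor a)"
    by (auto simp: indicator_def split: if_splits)
  then obtain i P where P: "P \<in> cantor_stage a i"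
    and one: "\<bar>indicator {lo a i P<..<hi a i P} y - indicator {lo a i P<..<hi a i P} x\<bar> = (1::real)"
  proof
    assume h: "x \<in> fat_cantor a \<and> y \<notin> fat_cantor a"
    then obtain i P where "P \<in> cantor_stage a i" "y \<in> {lo a i P<..<hi a i P}" using not_fat xy by blast
    moreover have "x \<notin> {lo a i P<..<hi a i P}" using in_fat h calculation by blast
    ultimately show ?thesis using that by (auto simp: indicator_def)
  next
    assume h: "y \<in> fat_cantor a \<and> x \<notin> fat_cantor a"
    then obtain i P where "P \<in> cantor_stage a i" "x \<in> {lo a i P<..<hi a i P}" using not_fat xy by blast
    moreover have "y \<notin> {lo a i P<..<hi a i P}" using in_fat h calculation by blast
    ultimately show ?thesis using that by (auto simp: indicator_def)
  qed
  have xney: "x \<noteq> y" using False by auto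
  then have r: "\<bar>x - y\<bar> > 0" by simp
  have um: "\<bar>indicator (fat_cantor a) y - indicator (fat_cantor a) x\<bar> = (1::real)"
    using False by (auto simp: indicator_def)
  let ?m = "measure lborel {z \<in> {0..1}. \<bar>x - z\<bar> < \<bar>x - y\<bar>}"
  have m: "\<bar>x - y\<bar> \<le> ?m" by (rule ball_measure[OF xy])
  have "1 / (\<bar>x - y\<bar> powr s * ?m) \<le> 1 / (\<bar>x - y\<bar> powr s * \<bar>x - y\<bar>)"
    using r m by (intro divide_left_mono mult_left_mono mult_pos_pos) auto
  also have "\<dots> = \<bar>x - y\<bar> powr (-1-s)"
  proof -
    have e: "-1-s = -(1+s)" by simp
    have "\<bar>x - y\<bar> powr (1+s) = \<bar>x - y\<bar> powr s * \<bar>x - y\<bar>"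
      using r by (simp add: powr_add)
    then show ?thesis unfolding e powr_minus_divide by simp
  qed
  finally have "ennreal (\<bar>indicator (fat_cantor a) y - indicator (fat_cantor a) x\<bar> /
          (\<bar>x - y\<bar> powr s * ?m)) \<le> GG s a i P x y"
    unfolding GG_def one um by (intro ennreal_leI) simp
  also have "\<dots> \<le> (\<Sum>P\<in>cantor_stage a i. GG s a i P x y)"
    by (rule member_le_sum) (use P stage_card in auto)
  also have "\<dots> \<le> (\<Sum>i. \<Sum>P\<in>cantor_stage a i. GG s a i P x y)"
    using sum_le_suminf[OF summableI, of "{i}" "\<lambda>i. \<Sum>P\<in>cantor_stage a i. GG s a i P x y"] by simp
  finally show ?thesis .
qed
lemma GG_meas[measurable]: "(\<lambda>(x, y). GG s a i P x y) \<in> borel_measurable (lborel \<Otimes>\<^sub>M lborel)"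
  unfolding GG_def by measurable

lemma GG_meas_y[measurable]: "GG s a i P x \<in> borel_measurable lborel"
  unfolding GG_def by measurable

lemma GG_meas_x: "(\<lambda>x. \<integral>\<^sup>+y. GG s a i P x y \<partial>lborel) \<in> borel_measurable lborel"
  using lborel.borel_measurable_nn_integral[of "GG s a i P" lborel] GG_meas by simp

lemma term_eq:
  fixes s a :: real and i :: nat
  assumes a: "0 < a"
  shows "2 ^ i * (4 * (a ^ Suc i) powr (1-s) / (s*(1-s))) = 2 / (s*(1-s)) * (2 * a powr (1 - s)) ^ Suc i"
proof -
  have "(a ^ Suc i) powr (1-s) = (a powr (1 - s)) ^ Suc i"
  proof -
    have h1: "a powr real (Suc i) = a ^ Suc i" by (rule powr_realpow[OF a])
    have B: "(a powr (1 - s)) ^ Suc i = a powr (real (Suc i) * (1 - s))"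
      by (rule powr_power) (use a in simp)
    have A: "(a ^ Suc i) powr (1-s) = a powr (real (Suc i) * (1-s))"
      unfolding h1[symmetric] powr_powr ..
    show ?thesis using A B by simp
  qed
  then show ?thesis by (simp add: power_mult_distrib field_simps)
qed

theorem lemma4p1:
  fixes s :: real
  assumes "0 < s" and "s < 1"
  shows "\<exists>C::real. C > 0 \<and> (\<forall>a::real. 0 < a \<and> a < 1/3 \<longrightarrow>
           besov_energy s (indicator (fat_cantor a))
             \<le> ennreal C * (\<Sum>j. ennreal ((2 * a powr (1 - s)) ^ Suc j)))"
proof (intro exI[of _ "2 / (s*(1-s))"] conjI allI impI)
  show "0 < 2 / (s * (1 - s))" using assms by simp
  fix a :: real assume a: "0 < a \<and> a < 1/3"
  let ?S = "\<lambda>i x y. \<Sum>P\<in>cantor_stage a i. GG s a i P x y"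
  have "besov_energy s (indicator (fat_cantor a)) \<le> (\<integral>\<^sup>+x. \<integral>\<^sup>+y. (\<Sum>i. ?S i x y) \<partial>lborel \<partial>lborel)"
    unfolding besov_energy_def
  proof (rule nn_integral_mono)
    fix x :: real
    show "(\<integral>\<^sup>+y\<in>{0..1}. ennreal (\<bar>indicator (fat_cantor a) y - indicator (fat_cantor a) x\<bar> /
          (\<bar>x - y\<bar> powr s * measure lborel {z \<in> {0..1}. \<bar>x - z\<bar> < \<bar>x - y\<bar>})) \<partial>lborel) * indicator {0..1} x
        \<le> (\<integral>\<^sup>+y. (\<Sum>i. ?S i x y) \<partial>lborel)"
    proof (cases "x \<in> {0..1}")
      case True
      have "(\<integral>\<^sup>+y\<in>{0..1}. ennreal (\<bar>indicator (fat_cantor a) y - indicator (fat_cantor a) x\<bar> /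
          (\<bar>x - y\<bar> powr s * measure lborel {z \<in> {0..1}. \<bar>x - z\<bar> < \<bar>x - y\<bar>})) \<partial>lborel)
        \<le> (\<integral>\<^sup>+y. (\<Sum>i. ?S i x y) \<partial>lborel)"
      proof (rule nn_integral_mono)
        fix y :: real
        show "ennreal (\<bar>indicator (fat_cantor a) y - indicator (fat_cantor a) x\<bar> /
          (\<bar>x - y\<bar> powr s * measure lborel {z \<in> {0..1}. \<bar>x - z\<bar> < \<bar>x - y\<bar>})) * indicator {0..1} y
          \<le> (\<Sum>i. ?S i x y)"
          using pointwise[OF assms(1) True, of y a] by (cases "y \<in> {0..1}") auto
      qed
      then show ?thesis using True by simp
    qed simp
  qed
  also have "\<dots> = (\<integral>\<^sup>+x. (\<Sum>i. \<Sum>P\<in>cantor_stage a i. \<integral>\<^sup>+y. GG s a i P x y \<partial>lborel) \<partial>lborel)"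
    by (intro nn_integral_cong) (simp add: nn_integral_suminf nn_integral_sum)
  also have "\<dots> = (\<Sum>i. \<Sum>P\<in>cantor_stage a i. \<integral>\<^sup>+x. \<integral>\<^sup>+y. GG s a i P x y \<partial>lborel \<partial>lborel)"
    using GG_meas_x by (simp add: nn_integral_suminf nn_integral_sum)
  also have "\<dots> \<le> (\<Sum>i. ennreal (2 ^ i * (4 * (a ^ Suc i) powr (1-s) / (s*(1-s)))))"
  proof (rule suminf_le[OF _ summableI summableI])
    fix i
    let ?c = "4 * (a ^ Suc i) powr (1-s) / (s*(1-s))"
    have "(\<Sum>P\<in>cantor_stage a i. \<integral>\<^sup>+x. \<integral>\<^sup>+y. GG s a i P x y \<partial>lborel \<partial>lborel)
        \<le> (\<Sum>P\<in>cantor_stage a i. ennreal ?c)"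
    proof (rule sum_mono)
      fix P
      have "hi a i P - lo a i P = a ^ Suc i" unfolding hi_def lo_def by simp
      moreover have "lo a i P < hi a i P" unfolding hi_def lo_def using a by simp
      ultimately show "(\<integral>\<^sup>+x. \<integral>\<^sup>+y. GG s a i P x y \<partial>lborel \<partial>lborel) \<le> ennreal ?c"
        unfolding GG_def using interval_energy[OF assms, of "lo a i P" "hi a i P"] by simp
    qed
    also have "\<dots> = of_nat (card (cantor_stage a i)) * ennreal ?c"
      by simp
    also have "\<dots> = ennreal (real (card (cantor_stage a i))) * ennreal ?c"
      by (simp add: ennreal_of_nat_eq_real_of_nat)
    also have "\<dots> = ennreal (real (card (cantor_stage a i)) * ?c)"
      by (rule ennreal_mult[symmetric]) (use assms in auto)
    also have "\<dots> \<le> ennreal (2 ^ i * ?c)"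
    proof (rule ennreal_leI, rule mult_right_mono)
      show "real (card (cantor_stage a i)) \<le> 2 ^ i"
        using stage_card[of a i] by (metis of_nat_le_iff of_nat_numeral of_nat_power)
      show "0 \<le> ?c" using assms by simp
    qed
    finally show "(\<Sum>P\<in>cantor_stage a i. \<integral>\<^sup>+x. \<integral>\<^sup>+y. GG s a i P x y \<partial>lborel \<partial>lborel)
        \<le> ennreal (2 ^ i * ?c)" .
  qed
  also have "\<dots> = (\<Sum>i. ennreal (2 / (s*(1-s))) * ennreal ((2 * a powr (1 - s)) ^ Suc i))"
  proof -
    have "ennreal (2 ^ i * (4 * (a ^ Suc i) powr (1-s) / (s*(1-s))))
       = ennreal (2 / (s*(1-s))) * ennreal ((2 * a powr (1 - s)) ^ Suc i)" for i
    proof -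
      have "ennreal (2 ^ i * (4 * (a ^ Suc i) powr (1-s) / (s*(1-s))))
          = ennreal (2 / (s*(1-s)) * (2 * a powr (1 - s)) ^ Suc i)"
        using a by (simp only: term_eq)
      also have "\<dots> = ennreal (2 / (s*(1-s))) * ennreal ((2 * a powr (1 - s)) ^ Suc i)"
        by (rule ennreal_mult) (use assms in auto)
      finally show ?thesis .
    qed
    then show ?thesis by (simp only:)
  qed
  also have "\<dots> = ennreal (2 / (s*(1-s))) * (\<Sum>i. ennreal ((2 * a powr (1 - s)) ^ Suc i))"
    by (rule ennreal_suminf_cmult)
  finally show "besov_energy s (indicator (fat_cantor a))
             \<le> ennreal (2 / (s*(1-s))) * (\<Sum>j. ennreal ((2 * a powr (1 - s)) ^ Suc j))" .
qed
end
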